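(* Let $\Phi:\mathcal{S}(\mathbb{C}^2)\to\mathcal{S}(\mathbb{C}^2)$ be a map. The following are equivalent: (1) $D_z(\Phi(\rho),\Phi(\omega))=D_z(\rho,\omega)$ for all $\rho,\omega\in\mathcal{S}(\mathbb{C}^2)$; (2) $|\mathbf{b}_{\Phi(\rho)}|=|\mathbf{b}_\rho|$ for all $\rho\in\mathcal{S}(\mathbb{C}^2)$, and either $(\mathbf{b}_{\Phi(\rho)})_3=(\mathbf{b}_\rho)_3$ for all $\rho\in\mathcal{S}(\mathbb{C}^2)$, or $(\mathbf{b}_{\Phi(\rho)})_3=-(\mathbf{b}_\rho)_3$ for all $\rho\in\mathcal{S}(\mathbb{C}^2)$.
   Context: Let $\mathcal{H}=\mathbb{C}^2$, $\mathcal{H}^*$ its dual space, and $\mathcal{S}(\mathcal{H})$ the set of density operators (positive semidefinite, trace one) on $\mathcal{H}$. For a linear operator $A$ on $\mathcal{H}$, its transpose $A^T$ is the operator on $\mathcal{H}^*$ defined by $(A^T\varphi)(x)=\varphi(Ax)$. For $\rho,\omega\in\mathcal{S}(\mathcal{H})$, the set of quantum couplings is $\mathcal{C}(\rho,\omega)=\{\Pi\in\mathcal{S}(\mathcal{H}\otimes\mathcal{H}^* ):\ \mathrm{tr}_{\mathcal{H}^*}[\Pi]=\omega,\ \mathrm{tr}_{\mathcal{H}}[\Pi]=\rho^T\}$. The Pauli matrices are $\sigma_1=\begin{bmatrix}0&1\\1&0\end{bmatrix}$, $\sigma_2=\begin{bmatrix}0&-i\\i&0\end{bmatrix}$, $\sigma_3=\sigma_z=\begin{bmatrix}1&0\\0&-1\end{bmatrix}$.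 The cost operator is $C_z=(\sigma_z\otimes I^T-I\otimes\sigma_z^T)^2$ and the quantum Wasserstein distance $D_z$ is defined by $D_z^2(\rho,\omega)=\inf\{\mathrm{tr}_{\mathcal{H}\otimes\mathcal{H}^*}[\Pi C_z]:\Pi\in\mathcal{C}(\rho,\omega)\}$. The Bloch vector of $\rho$ is $\mathbf{b}_\rho=(\mathrm{tr}[\sigma_j\rho])_{j=1}^3\in\mathbb{R}^3$, $|\cdot|$ the Euclidean norm, and $(\mathbf{b}_\rho)_3$ its third coordinate. *)

theory Defs
  imports "HOL-Analysis.Analysis"
begin

text \<open>H^* is identified with C^2 via the dual basis, so that the transpose A^T
  of an operator is the ordinary matrix transpose. Operators on the
  4-dimensional space H (x) H^* are matrices indexed by the product type 2 x 2,
  the first component indexing H and the second H^*.\<close>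

type_synonym op2 = "complex^2^2"
type_synonym op4 = "complex^(2 \<times> 2)^(2 \<times> 2)"

definition psd :: "complex^'n^'n \<Rightarrow> bool" where
  "psd A \<longleftrightarrow> (\<forall>x :: complex^'n.
     (let q = (\<Sum>i\<in>UNIV. \<Sum>j\<in>UNIV. cnj (x$i) * A$i$j * x$j) in Im q = 0 \<and> Re q \<ge> 0))"

definition is_state :: "complex^'n^'n \<Rightarrow> bool" where
  "is_state A \<longleftrightarrow> psd A \<and> trace A = 1"

definition kron :: "op2 \<Rightarrow> op2 \<Rightarrow> op4" where
  "kron A B = (\<chi> p q. A $ fst p $ fst q * B $ snd p $ snd q)"

definition ptrace2 :: "op4 \<Rightarrow> op2" where
  "ptrace2 P = (\<chi> i j. \<Sum>k\<in>UNIV. P $ (i,k) $ (j,k))"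

definition ptrace1 :: "op4 \<Rightarrow> op2" where
  "ptrace1 P = (\<chi> k l. \<Sum>i\<in>UNIV. P $ (i,k) $ (i,l))"

definition sigma1 :: op2 where "sigma1 = vector [vector [0, 1], vector [1, 0]]"
definition sigma2 :: op2 where "sigma2 = vector [vector [0, -\<i>], vector [\<i>, 0]]"
definition sigma3 :: op2 where "sigma3 = vector [vector [1, 0], vector [0, -1]]"

definition couplings :: "op2 \<Rightarrow> op2 \<Rightarrow> op4 set" where
  "couplings \<rho> \<omega> = {P. is_state P \<and> ptrace2 P = \<omega> \<and> ptrace1 P = transpose \<rho>}"

definition Cz :: op4 where
  "Cz = (let M = kron sigma3 (mat 1) - kron (mat 1) (transpose sigma3) in M ** M)"

definition Dz :: "op2 \<Rightarrow> op2 \<Rightarrow> real" where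
  "Dz \<rho> \<omega> = sqrt (Inf {Re (trace (P ** Cz)) | P. P \<in> couplings \<rho> \<omega>})"

definition bloch :: "op2 \<Rightarrow> real^3" where
  "bloch \<rho> = vector [Re (trace (sigma1 ** \<rho>)), Re (trace (sigma2 ** \<rho>)), Re (trace (sigma3 ** \<rho>))]"

end

theory Submission
  imports Defs
begin


definition qf :: "complex^'n^'n \<Rightarrow> complex^'n \<Rightarrow> complex" where
  "qf A x = (\<Sum>i\<in>UNIV. \<Sum>j\<in>UNIV. cnj (x$i) * A$i$j * x$j)"

lemma psd_qf: "psd A \<longleftrightarrow> (\<forall>x. Im (qf A x) = 0 \<and> Re (qf A x) \<ge> 0)"
  unfolding psd_def qf_def Let_def by simp

lemma sum_two:
  fixes g :: "'n::finite \<Rightarrow> 'b::comm_monoid_add"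
  assumes "i \<noteq> j" "\<And>k. k \<noteq> i \<Longrightarrow> k \<noteq> j \<Longrightarrow> g k = 0"
  shows "sum g UNIV = g i + g j"
proof -
  have "sum g UNIV = sum g {i,j}"
    by (rule sum.mono_neutral_right) (use assms in auto)
  thus ?thesis using assms(1) by simp
qed

lemma sum_one:
  fixes g :: "'n::finite \<Rightarrow> 'b::comm_monoid_add"
  assumes "\<And>k. k \<noteq> i \<Longrightarrow> g k = 0"
  shows "sum g UNIV = g i"
proof -
  have "sum g UNIV = sum g {i}"
    by (rule sum.mono_neutral_right) (use assms in auto)
  thus ?thesis by simp
qed

lemma qf_two:
  fixes A :: "complex^'n^'n"
  assumes "i \<noteq> j"
  shows "qf A (\<chi> k. if k = i then a else if k = j then b else 0) =
     cnj a * A$i$i * a + cnj a * A$i$j * b + cnj b * A$j$i * a + cnj b * A$j$j * b"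
  unfolding qf_def
  apply (subst sum_two[OF assms])
   apply simp
  apply (subst sum_two[OF assms], simp)+
  using assms by (simp add: algebra_simps)

lemma qf_one:
  fixes A :: "complex^'n^'n"
  shows "qf A (\<chi> k. if k = i then a else 0) = cnj a * A$i$i * a"
  unfolding qf_def
  apply (subst sum_one[where i=i])
   apply simp
  apply (subst sum_one[where i=i], simp)+
  by simp

lemma psd_diag:
  assumes "psd A" shows "Im (A$i$i) = 0" "Re (A$i$i) \<ge> 0"
  using assms qf_one[of A i 1] unfolding psd_qf by (auto dest: spec[of _ "\<chi> k. if k = i then 1 else 0"])

lemma psd_herm:
  assumes "psd A" shows "A$j$i = cnj (A$i$j)"
proof (cases "i = j")
  case True thus ?thesis using psd_diag[OF assms, of i] by (simp add: complex_eq_iff)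
next
  case False
  have d: "Im (A$i$i) = 0" "Im (A$j$j) = 0" using psd_diag[OF assms] by auto
  have 1: "Im (qf A (\<chi> k. if k = i then 1 else if k = j then 1 else 0)) = 0"
    using assms unfolding psd_qf by blast
  have 2: "Im (qf A (\<chi> k. if k = i then 1 else if k = j then \<i> else 0)) = 0"
    using assms unfolding psd_qf by blast
  from 1 2 d show ?thesis unfolding qf_two[OF False]
    by (simp add: complex_eq_iff algebra_simps)
qed

lemma quad_disc:
  fixes al W de :: real
  assumes "\<And>t. al * t^2 - 2*t*W + W*de \<ge> 0" "W \<ge> 0" "al \<ge> 0" "de \<ge> 0"
  shows "W \<le> al * de"
proof (cases "W = 0")
  case True
  with assms show ?thesis by simp
next
  case False
  hence Wp: "W > 0" using assms by auto
  show ?thesis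
  proof (cases "al = 0")
    case True
    have "al * (de+1)^2 - 2*(de+1)*W + W*de \<ge> 0" by (rule assms(1))
    hence "-W*de - 2*W \<ge> 0" using True by (simp add: algebra_simps)
    with Wp show ?thesis
      using mult_nonneg_nonneg[of W de] assms(4) by linarith
  next
    case False
    hence ap: "al > 0" using assms by auto
    have "al * (W/al)^2 - 2*(W/al)*W + W*de \<ge> 0" by (rule assms(1))
    hence "W*W/al - 2*(W*W/al) + W*de \<ge> 0" using ap by (simp add: power2_eq_square field_simps)
    hence "W*de \<ge> W*W/al" by simp
    hence "W*de*al \<ge> W*W" using ap by (simp add: field_simps)
    hence "W * (al*de) \<ge> W * W" by (simp add: algebra_simps)
    thus ?thesis using Wp by (simp add: mult_le_cancel_left)
  qed
qed

lemma alg_cs: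
  assumes "Im a = 0" "Im d = 0"
  shows "cnj (complex_of_real t) * a * complex_of_real t + cnj (complex_of_real t) * w * - cnj w +
        cnj (- cnj w) * cnj w * complex_of_real t + cnj (- cnj w) * d * - cnj w
     = complex_of_real (Re a * t^2 - 2*t*(cmod w)^2 + (cmod w)^2 * Re d)"
proof -
  have c: "cmod w * cmod w = Re w * Re w + Im w * Im w" using cmod_power2[of w] by (simp add: power2_eq_square)
  show ?thesis using assms by (simp add: complex_eq_iff power2_eq_square algebra_simps c)
qed

lemma psd_cs:
  assumes "psd A" shows "(cmod (A$i$j))^2 \<le> Re (A$i$i) * Re (A$j$j)"
proof (cases "i = j")
  case True
  have "cmod (A$i$i) = Re (A$i$i)" using psd_diag[OF assms, of i] by (simp add: cmod_eq_Re)
  thus ?thesis using True by (simp add: power2_eq_square)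
next
  case False
  define w where "w = A$i$j"
  have h: "A$j$i = cnj w" unfolding w_def by (rule psd_herm[OF assms])
  have "\<And>t::real. Re (A$i$i) * t^2 - 2*t*(cmod w)^2 + (cmod w)^2 * Re (A$j$j) \<ge> 0"
  proof -
    fix t :: real
    have "Re (qf A (\<chi> k. if k = i then complex_of_real t else if k = j then - cnj w else 0)) \<ge> 0"
      using assms unfolding psd_qf by blast
    also have "qf A (\<chi> k. if k = i then complex_of_real t else if k = j then - cnj w else 0)
       = complex_of_real (Re (A$i$i) * t^2 - 2*t*(cmod w)^2 + (cmod w)^2 * Re (A$j$j))"
      unfolding qf_two[OF False] h w_def[symmetric]
      by (rule alg_cs) (use psd_diag[OF assms] in auto)
    finally show "Re (A$i$i) * t^2 - 2*t*(cmod w)^2 + (cmod w)^2 * Re (A$j$j) \<ge> 0" by simp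
  qed
  hence "(cmod w)^2 \<le> Re (A$i$i) * Re (A$j$j)"
    by (rule quad_disc) (use psd_diag[OF assms] in auto)
  thus ?thesis by (simp add: w_def)
qed



lemma UNIV4: "(UNIV :: (2 \<times> 2) set) = {(1,1),(1,2),(2,1),(2,2)}"
  using exhaust_2 by auto

lemma sum4: "sum f (UNIV :: (2 \<times> 2) set) = f (1,1) + f (1,2) + f (2,1) + f (2,2)"
  unfolding UNIV4 by (simp add: add.assoc)

lemma forall4: "(\<forall>p::2\<times>2. P p) \<longleftrightarrow> P (1,1) \<and> P (1,2) \<and> P (2,1) \<and> P (2,2)"
  using UNIV4 by (metis UNIV_I insertE empty_iff)

definition sg :: "2 \<Rightarrow> complex" where "sg i = (if i = 1 then 1 else -1)"

lemma sigma3_entry: "sigma3 $ i $ j = (if i = j then sg i else 0)"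
proof -
  have "\<forall>i j. sigma3 $ i $ j = (if i = j then sg i else 0)"
    unfolding forall_2 by (simp add: sigma3_def sg_def)
  thus ?thesis by blast
qed

lemma mat1_entry: "(mat 1 :: op2) $ i $ j = (if i = j then 1 else 0)"
  by (simp add: mat_def)

lemma M_entry: "(kron sigma3 (mat 1) - kron (mat 1) (transpose sigma3)) $ p $ q
   = (if p = q then sg (fst p) - sg (snd p) else 0)"
  by (auto simp: kron_def sigma3_entry mat1_entry transpose_def prod_eq_iff)

lemma Cz_entry: "Cz $ p $ q = (if p = q \<and> fst p \<noteq> snd p then 4 else 0)"
proof -
  have "Cz $ p $ q = (\<Sum>r\<in>UNIV. (if p = r then sg (fst p) - sg (snd p) else 0) * (if r = q then sg (fst r) - sg (snd r) else 0))"
    unfolding Cz_def Let_def matrix_matrix_mult_def by (simp only: vec_lambda_beta M_entry)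
  also have "\<dots> = (if p = q then (sg (fst p) - sg (snd p))^2 else 0)"
    by (subst sum_one[where i=p]) (auto simp: power2_eq_square)
  also have "\<dots> = (if p = q \<and> fst p \<noteq> snd p then 4 else 0)"
    using exhaust_2[of "fst p"] exhaust_2[of "snd p"] by (auto simp: sg_def)
  finally show ?thesis .
qed

definition cost :: "op4 \<Rightarrow> real" where "cost P = Re (trace (P ** Cz))"

lemma cost_eq: "cost P = 4 * (Re (P$(1,2)$(1,2)) + Re (P$(2,1)$(2,1)))"
proof -
  have "trace (P ** Cz) = (\<Sum>p\<in>UNIV. \<Sum>r\<in>UNIV. P$p$r * Cz$r$p)"
    unfolding trace_def matrix_matrix_mult_def by simp
  also have "\<dots> = (\<Sum>p\<in>UNIV. P$p$p * (if fst p \<noteq> snd p then 4 else 0))"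
  proof -
    have "\<And>p. (\<Sum>r\<in>UNIV. P$p$r * Cz$r$p) = P$p$p * (if fst p \<noteq> snd p then 4 else 0)"
      subgoal for p by (subst sum_one[where i=p]) (auto simp: Cz_entry)
      done
    thus ?thesis by simp
  qed
  also have "\<dots> = 4 * (P$(1,2)$(1,2) + P$(2,1)$(2,1))"
    by (simp add: sum4)
  finally show ?thesis unfolding cost_def by simp
qed

definition st :: "real \<Rightarrow> complex \<Rightarrow> op2" where
  "st c w = (\<chi> i j. if i = 1 then (if j = 1 then complex_of_real c else w)
                     else (if j = 1 then cnj w else complex_of_real (1 - c)))"

lemma st_entries [simp]: "st c w $ 1 $ 1 = complex_of_real c" "st c w $ 1 $ 2 = w"
  "st c w $ 2 $ 1 = cnj w" "st c w $ 2 $ 2 = complex_of_real (1 - c)"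
  by (simp_all add: st_def)

lemma trace2: "trace (A::op2) = A$1$1 + A$2$2"
  by (simp add: trace_def sum_2)

lemma state_st:
  fixes \<rho> :: op2
  assumes "is_state \<rho>" shows "\<rho> = st (Re (\<rho>$1$1)) (\<rho>$1$2)"
proof -
  have p: "psd \<rho>" and t: "\<rho>$1$1 + \<rho>$2$2 = 1" using assms by (auto simp: is_state_def trace2)
  have d: "Im (\<rho>$1$1) = 0" "Im (\<rho>$2$2) = 0" using psd_diag[OF p] by auto
  have h: "\<rho>$2$1 = cnj (\<rho>$1$2)" by (rule psd_herm[OF p])
  have "\<rho>$2$2 = 1 - \<rho>$1$1" using t by (simp add: algebra_simps)
  show ?thesis unfolding vec_eq_iff forall_2
    using d h t \<open>\<rho>$2$2 = 1 - \<rho>$1$1\<close> by (simp add: complex_eq_iff)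
qed

lemma state_bounds:
  fixes \<rho> :: op2
  assumes "is_state \<rho>"
  shows "0 \<le> Re (\<rho>$1$1)" "Re (\<rho>$1$1) \<le> 1" "(cmod (\<rho>$1$2))^2 \<le> Re (\<rho>$1$1) * (1 - Re (\<rho>$1$1))"
proof -
  have p: "psd \<rho>" and t: "\<rho>$1$1 + \<rho>$2$2 = 1" using assms by (auto simp: is_state_def trace2)
  have r: "Re (\<rho>$2$2) = 1 - Re (\<rho>$1$1)" using t by (simp add: complex_eq_iff)
  show "0 \<le> Re (\<rho>$1$1)" using psd_diag[OF p] by auto
  show "Re (\<rho>$1$1) \<le> 1" using psd_diag(2)[OF p, of 2] r by auto
  show "(cmod (\<rho>$1$2))^2 \<le> Re (\<rho>$1$1) * (1 - Re (\<rho>$1$1))" using psd_cs[OF p, of 1 2] r by simp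
qed

lemma bloch3: "bloch (st c w) $ 3 = 2*c - 1"
  by (simp add: bloch_def trace2 sigma3_def matrix_matrix_mult_def sum_2)

lemma norm3_sq: "(norm (x::real^3))^2 = (x$1)^2 + (x$2)^2 + (x$3)^2"
  by (simp add: norm_vec_def L2_set_def sum_3)

lemma bloch_norm_sq: "(norm (bloch (st c w)))^2 = 4 * (cmod w)^2 + (2*c - 1)^2"
  unfolding norm3_sq using cmod_power2[of w]
  by (simp add: bloch_def trace2 sigma1_def sigma2_def sigma3_def matrix_matrix_mult_def sum_2
       cmod_power2 power2_eq_square algebra_simps)

lemma coupling_eqs:
  assumes "P \<in> couplings \<rho> \<omega>"
  shows "psd P" "trace P = 1"
    "\<omega>$1$1 = P$(1,1)$(1,1) + P$(1,2)$(1,2)" "\<omega>$2$2 = P$(2,1)$(2,1) + P$(2,2)$(2,2)"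
    "\<omega>$1$2 = P$(1,1)$(2,1) + P$(1,2)$(2,2)"
    "\<rho>$1$1 = P$(1,1)$(1,1) + P$(2,1)$(2,1)" "\<rho>$2$2 = P$(1,2)$(1,2) + P$(2,2)$(2,2)"
    "\<rho>$2$1 = P$(1,1)$(1,2) + P$(2,1)$(2,2)"
proof -
  have a: "is_state P" "ptrace2 P = \<omega>" "ptrace1 P = transpose \<rho>" using assms by (auto simp: couplings_def)
  show "psd P" "trace P = 1" using a(1) by (auto simp: is_state_def)
  have b: "\<And>i j. \<omega>$i$j = (\<Sum>k\<in>UNIV. P $ (i,k) $ (j,k))" using a(2) by (auto simp: ptrace2_def)
  have c: "\<And>k l. \<rho>$l$k = (\<Sum>i\<in>UNIV. P $ (i,k) $ (i,l))"
  proof -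
    fix k l
    have "transpose \<rho> $ k $ l = ptrace1 P $ k $ l" using a(3) by simp
    thus "\<rho>$l$k = (\<Sum>i\<in>UNIV. P $ (i,k) $ (i,l))" by (simp add: ptrace1_def transpose_def)
  qed
  show "\<omega>$1$1 = P$(1,1)$(1,1) + P$(1,2)$(1,2)" "\<omega>$2$2 = P$(2,1)$(2,1) + P$(2,2)$(2,2)"
    "\<omega>$1$2 = P$(1,1)$(2,1) + P$(1,2)$(2,2)" by (simp_all add: b sum_2)
  show "\<rho>$1$1 = P$(1,1)$(1,1) + P$(2,1)$(2,1)" "\<rho>$2$2 = P$(1,2)$(1,2) + P$(2,2)$(2,2)"
    "\<rho>$2$1 = P$(1,1)$(1,2) + P$(2,1)$(2,2)" by (simp_all add: c sum_2)
qed

lemma cost_nonneg: "P \<in> couplings \<rho> \<omega> \<Longrightarrow> cost P \<ge> 0"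
  using psd_diag(2)[OF coupling_eqs(1), of P \<rho> \<omega>] by (simp add: cost_eq)

lemma key_ineq:
  fixes a b p m :: real
  assumes "a \<ge> 0" "b \<ge> 0" "p \<ge> 0" "a^2 + b^2 + 2*p = 1" "m \<le> p * (a+b)^2"
    "0 \<le> 1 - (a^2 - b^2)^2 - 4*m"
  shows "m \<le> p * (1 + sqrt (1 - (a^2 - b^2)^2 - 4*m))"
proof -
  define sv where "sv = (a+b)^2"
  have hid: "(sv - 1)^2 = 1 - (a^2 - b^2)^2 - 4*p * sv"
  proof -
    define T where "T = a^2+b^2+2*p"
    have "(sv - T)^2 = T^2 - (a^2 - b^2)^2 - 4*p * sv"
      unfolding sv_def T_def by (simp add: power2_eq_square algebra_simps)
    moreover have "T = 1" using assms(4) T_def by simp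
    ultimately show ?thesis by simp
  qed
  have "p * sv \<ge> m" using assms(5) sv_def by simp
  hence "(sv - 1)^2 \<le> 1 - (a^2 - b^2)^2 - 4*m" using hid by linarith
  hence "sqrt ((sv-1)^2) \<le> sqrt (1 - (a^2 - b^2)^2 - 4*m)" by (rule real_sqrt_le_mono)
  hence "sv - 1 \<le> sqrt (1 - (a^2 - b^2)^2 - 4*m)" by simp
  hence "p * sv \<le> p * (1 + sqrt (1 - (a^2 - b^2)^2 - 4*m))" using assms(3)
    by (intro mult_left_mono) auto
  with \<open>p * sv \<ge> m\<close> show ?thesis by linarith
qed

definition Qf :: "real \<Rightarrow> real \<Rightarrow> real" where
  "Qf c m = sqrt (1 - (2*c - 1)^2 - 4*m)"

lemma lower_self:
  fixes \<rho> :: op2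
  assumes st: "is_state \<rho>" and P: "P \<in> couplings \<rho> \<rho>"
  shows "cost P \<ge> 8 * (cmod (\<rho>$1$2))^2 / (1 + Qf (Re (\<rho>$1$1)) ((cmod (\<rho>$1$2))^2))"
proof -
  note e = coupling_eqs[OF P]
  define c where "c = Re (\<rho>$1$1)"
  define m where "m = (cmod (\<rho>$1$2))^2"
  define x11 where "x11 = Re (P$(1,1)$(1,1))"
  define x12 where "x12 = Re (P$(1,2)$(1,2))"
  define x21 where "x21 = Re (P$(2,1)$(2,1))"
  define x22 where "x22 = Re (P$(2,2)$(2,2))"
  have nn: "x11 \<ge> 0" "x12 \<ge> 0" "x21 \<ge> 0" "x22 \<ge> 0"
    using psd_diag(2)[OF e(1)] by (auto simp: x11_def x12_def x21_def x22_def)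
  have r22: "Re (\<rho>$2$2) = 1 - c"
    using st by (subst state_st[OF st]) (simp add: c_def)
  have eq1: "c = x11 + x12" using e(3) by (simp add: c_def x11_def x12_def)
  have eq2: "1 - c = x21 + x22" using e(4) r22 by (simp add: x21_def x22_def)
  have eq3: "c = x11 + x21" using e(6) by (simp add: c_def x11_def x21_def)
  have p_eq: "x12 = x21" using eq1 eq3 by simp
  have cs1: "cmod (P$(1,1)$(2,1)) \<le> sqrt x11 * sqrt x21"
    using psd_cs[OF e(1), of "(1,1)" "(2,1)"] unfolding x11_def x21_def
    by (metis real_le_rsqrt real_sqrt_mult)
  have cs2: "cmod (P$(1,2)$(2,2)) \<le> sqrt x12 * sqrt x22"
    using psd_cs[OF e(1), of "(1,2)" "(2,2)"] unfolding x12_def x22_def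
    by (metis real_le_rsqrt real_sqrt_mult)
  have "cmod (\<rho>$1$2) \<le> cmod (P$(1,1)$(2,1)) + cmod (P$(1,2)$(2,2))"
    using e(5) norm_triangle_ineq by metis
  also have "\<dots> \<le> sqrt x12 * (sqrt x11 + sqrt x22)"
    using cs1 cs2 p_eq by (simp add: algebra_simps)
  finally have "m \<le> (sqrt x12 * (sqrt x11 + sqrt x22))^2"
    unfolding m_def by (intro power_mono) auto
  also have "\<dots> = x12 * (sqrt x11 + sqrt x22)^2" using nn by (simp add: power_mult_distrib)
  finally have mle: "m \<le> x12 * (sqrt x11 + sqrt x22)^2" .
  have sq: "(sqrt x11)^2 = x11" "(sqrt x22)^2 = x22" using nn by auto
  have dd: "(sqrt x11)^2 - (sqrt x22)^2 = 2*c - 1" using sq eq1 eq2 p_eq by simp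
  have K: "0 \<le> 1 - ((sqrt x11)^2 - (sqrt x22)^2)^2 - 4*m"
  proof -
    have "m \<le> c * (1 - c)" using state_bounds(3)[OF st] by (simp add: m_def c_def)
    moreover have e: "1 - (2*c-1)^2 - 4*m = 4*(c*(1-c) - m)" by (simp add: power2_eq_square algebra_simps)
    ultimately show ?thesis unfolding dd e by simp
  qed
  have "m \<le> x12 * (1 + sqrt (1 - ((sqrt x11)^2 - (sqrt x22)^2)^2 - 4*m))"
    by (rule key_ineq) (use nn mle K sq eq1 eq2 p_eq in auto)
  moreover have "(sqrt x11)^2 - (sqrt x22)^2 = 2*c - 1" using sq eq1 eq2 p_eq by simp
  ultimately have "m \<le> x12 * (1 + Qf c m)" by (simp add: Qf_def)
  moreover have "Qf c m \<ge> 0" using K unfolding dd Qf_def by simp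
  ultimately have "8 * m / (1 + Qf c m) \<le> 8 * x12"
    by (simp add: divide_le_eq algebra_simps)
  also have "8 * x12 = cost P" using p_eq by (simp add: cost_eq x12_def x21_def)
  finally show ?thesis by (simp add: m_def c_def)
qed

lemma psd_rank1:
  fixes \<phi> :: "'n::finite \<Rightarrow> complex"
  assumes "r \<ge> 0"
  shows "psd (\<chi> p q. complex_of_real r * (\<phi> p * cnj (\<phi> q)))"
  unfolding psd_qf
proof
  fix x :: "complex^'n"
  define s where "s = (\<Sum>i\<in>UNIV. cnj (x$i) * \<phi> i)"
  have A: "qf (\<chi> p q. complex_of_real r * (\<phi> p * cnj (\<phi> q))) x
      = (\<Sum>i\<in>UNIV. \<Sum>j\<in>UNIV. complex_of_real r * ((cnj (x$i) * \<phi> i) * (x$j * cnj (\<phi> j))))"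
    unfolding qf_def by (simp add: algebra_simps)
  have B: "(\<Sum>i\<in>UNIV. \<Sum>j\<in>UNIV. complex_of_real r * ((cnj (x$i) * \<phi> i) * (x$j * cnj (\<phi> j))))
      = complex_of_real r * (s * cnj s)"
  proof -
    have "s * cnj s = (\<Sum>i\<in>UNIV. \<Sum>j\<in>UNIV. (cnj (x$i) * \<phi> i) * (x$j * cnj (\<phi> j)))"
      unfolding s_def by (simp add: sum_product)
    thus ?thesis by (simp add: sum_distrib_left)
  qed
  have "qf (\<chi> p q. complex_of_real r * (\<phi> p * cnj (\<phi> q))) x = complex_of_real r * (s * cnj s)"
    using A B by simp
  also have "\<dots> = complex_of_real (r * (cmod s)^2)" using complex_norm_square[of s] by simp
  finally show "Im (qf (\<chi> p q. complex_of_real r * (\<phi> p * cnj (\<phi> q))) x) = 0 \<and>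
      Re (qf (\<chi> p q. complex_of_real r * (\<phi> p * cnj (\<phi> q))) x) \<ge> 0"
    using assms by simp
qed

definition phi :: "real \<Rightarrow> complex \<Rightarrow> real \<Rightarrow> 2 \<times> 2 \<Rightarrow> complex" where
  "phi c w d p = (if fst p = 1 then (if snd p = 1 then complex_of_real (c + d) else w)
                  else (if snd p = 1 then cnj w else complex_of_real (1 - c + d)))"

lemma phi_simps [simp]: "phi c w d (1,1) = complex_of_real (c + d)" "phi c w d (1,2) = w"
  "phi c w d (2,1) = cnj w" "phi c w d (2,2) = complex_of_real (1 - c + d)"
  by (simp_all add: phi_def)

definition Popt :: "real \<Rightarrow> complex \<Rightarrow> real \<Rightarrow> op4" where
  "Popt c w d = (\<chi> p q. complex_of_real (1 / (1 + 2*d)) * (phi c w d p * cnj (phi c w d q)))"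

lemma Popt_coupling:
  assumes d0: "d \<ge> 0" and dd: "d^2 = c*(1-c) - (cmod w)^2"
  shows "Popt c w d \<in> couplings (st c w) (st c w)"
    "cost (Popt c w d) = 8 * (cmod w)^2 / (1 + 2*d)"
proof -
  define m where "m = (cmod w)^2"
  define k where "k = 1 / (1 + 2*d)"
  have ww: "w * cnj w = complex_of_real m" using complex_norm_square[of w] by (simp add: m_def)
  have ww': "cnj w * w = complex_of_real m" using ww by (simp add: mult.commute)
  have pos: "1 + 2*d > 0" using d0 by simp
  have h: "d*d = c*(1-c) - m" using dd by (simp add: m_def power2_eq_square)
  have "(c+d)*(c+d) + m = c*c + 2*c*d + (d*d) + m" by (simp add: algebra_simps)
  also have "\<dots> = c*(1+2*d)" unfolding h by (simp add: algebra_simps)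
  finally have q1: "(c+d)*(c+d) + m = c*(1+2*d)" .
  have "(1-c+d)*(1-c+d) + m = (1-c)*(1-c) + 2*(1-c)*d + (d*d) + m" by (simp add: algebra_simps)
  also have "\<dots> = (1-c)*(1+2*d)" unfolding h by (simp add: algebra_simps)
  finally have q2: "(1-c+d)*(1-c+d) + m = (1-c)*(1+2*d)" .
  have r1: "k*((c+d)*(c+d)) + k*m = c"
  proof -
    have "k*((c+d)*(c+d)) + k*m = k*((c+d)*(c+d) + m)" by (simp add: algebra_simps)
    also have "\<dots> = c" unfolding q1 k_def using pos by simp
    finally show ?thesis .
  qed
  have r2: "k*m + k*((1-c+d)*(1-c+d)) = 1 - c"
  proof -
    have "k*m + k*((1-c+d)*(1-c+d)) = k*((1-c+d)*(1-c+d) + m)" by (simp add: algebra_simps)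
    also have "\<dots> = 1 - c" unfolding q2 k_def using pos by simp
    finally show ?thesis .
  qed
  have r3: "k*(c+d) + k*(1-c+d) = 1"
  proof -
    have "k*(c+d) + k*(1-c+d) = k*(1+2*d)" by (simp add: algebra_simps)
    also have "\<dots> = 1" using pos by (simp add: k_def)
    finally show ?thesis .
  qed
  have P: "\<And>p q. Popt c w d $ p $ q = complex_of_real k * (phi c w d p * cnj (phi c w d q))"
    by (simp add: Popt_def k_def)
  have E: "Popt c w d $ (1,1) $ (1,1) = complex_of_real (k*((c+d)*(c+d)))"
    "Popt c w d $ (1,2) $ (1,2) = complex_of_real (k*m)"
    "Popt c w d $ (2,1) $ (2,1) = complex_of_real (k*m)"
    "Popt c w d $ (2,2) $ (2,2) = complex_of_real (k*((1-c+d)*(1-c+d)))"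
    "Popt c w d $ (1,1) $ (2,1) = complex_of_real (k*(c+d)) * w"
    "Popt c w d $ (1,2) $ (2,2) = complex_of_real (k*(1-c+d)) * w"
    "Popt c w d $ (2,1) $ (1,1) = complex_of_real (k*(c+d)) * cnj w"
    "Popt c w d $ (2,2) $ (1,2) = complex_of_real (k*(1-c+d)) * cnj w"
    "Popt c w d $ (1,1) $ (1,2) = complex_of_real (k*(c+d)) * cnj w"
    "Popt c w d $ (2,1) $ (2,2) = complex_of_real (k*(1-c+d)) * cnj w"
    "Popt c w d $ (1,2) $ (1,1) = complex_of_real (k*(c+d)) * w"
    "Popt c w d $ (2,2) $ (2,1) = complex_of_real (k*(1-c+d)) * w"
    unfolding P using ww ww' by (simp_all add: algebra_simps)
  have S1: "complex_of_real (k*((c+d)*(c+d))) + complex_of_real (k*m) = complex_of_real c"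
    by (simp only: of_real_add[symmetric] r1)
  have S1': "complex_of_real (k*((c+d)*(c+d))) + complex_of_real (k*m) = complex_of_real c"
    by (simp only: of_real_add[symmetric] r1)
  have S2: "complex_of_real (k*m) + complex_of_real (k*((1-c+d)*(1-c+d))) = complex_of_real (1 - c)"
    by (simp only: of_real_add[symmetric] r2)
  have S3: "\<And>z. complex_of_real (k*(c+d)) * z + complex_of_real (k*(1-c+d)) * z = z"
    by (simp only: distrib_right[symmetric] of_real_add[symmetric] r3) simp
  show "Popt c w d \<in> couplings (st c w) (st c w)"
    unfolding couplings_def
  proof (intro CollectI conjI)
    show "is_state (Popt c w d)"
      unfolding is_state_def
    proof
      show "psd (Popt c w d)" unfolding Popt_def by (rule psd_rank1) (use pos in simp)
      show "trace (Popt c w d) = 1"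
      proof -
        have "trace (Popt c w d) = (complex_of_real (k*((c+d)*(c+d))) + complex_of_real (k*m))
            + (complex_of_real (k*m) + complex_of_real (k*((1-c+d)*(1-c+d))))"
          unfolding trace_def sum4 E by (simp only: add.assoc)
        also have "\<dots> = 1" unfolding S1 S2 by simp
        finally show ?thesis .
      qed
    qed
    show "ptrace2 (Popt c w d) = st c w"
      unfolding vec_eq_iff forall_2 ptrace2_def vec_lambda_beta sum_2 E st_entries
      using S1 S2 S3[of w] S3[of "cnj w"] by (simp only: mult.commute add.commute; simp)
    show "ptrace1 (Popt c w d) = transpose (st c w)"
      unfolding vec_eq_iff forall_2 ptrace1_def transpose_def vec_lambda_beta sum_2 E st_entries
      using S1 S2 S3[of w] S3[of "cnj w"] by (simp only: mult.commute add.commute; simp)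
  qed
  show "cost (Popt c w d) = 8 * (cmod w)^2 / (1 + 2*d)"
    unfolding cost_eq E using pos by (simp add: k_def m_def)
qed

definition CS :: "op2 \<Rightarrow> op2 \<Rightarrow> real set" where
  "CS \<rho> \<omega> = {cost P | P. P \<in> couplings \<rho> \<omega>}"

lemma Dz_CS: "Dz \<rho> \<omega> = sqrt (Inf (CS \<rho> \<omega>))"
  unfolding Dz_def CS_def cost_def by simp

lemma CS_bdd: "bdd_below (CS \<rho> \<omega>)"
  unfolding CS_def bdd_below_def using cost_nonneg by blast

lemma Inf_self:
  fixes \<rho> :: op2
  assumes st: "is_state \<rho>"
  shows "Inf (CS \<rho> \<rho>) = 8 * (cmod (\<rho>$1$2))^2 / (1 + Qf (Re (\<rho>$1$1)) ((cmod (\<rho>$1$2))^2))"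
proof -
  define c where "c = Re (\<rho>$1$1)"
  define w where "w = \<rho>$1$2"
  define d where "d = sqrt (c*(1-c) - (cmod w)^2)"
  have r: "\<rho> = st c w" using state_st[OF st] by (simp add: c_def w_def)
  have nn: "c*(1-c) - (cmod w)^2 \<ge> 0" using state_bounds(3)[OF st] by (simp add: c_def w_def)
  have d0: "d \<ge> 0" and dd: "d^2 = c*(1-c) - (cmod w)^2" using nn by (auto simp: d_def)
  have Q: "Qf c ((cmod w)^2) = 2*d"
  proof -
    have "1 - (2*c-1)^2 - 4*(cmod w)^2 = 4 * (c*(1-c) - (cmod w)^2)"
      by (simp add: power2_eq_square algebra_simps)
    hence "Qf c ((cmod w)^2) = sqrt 4 * sqrt (c*(1-c) - (cmod w)^2)"
      unfolding Qf_def by (simp only: real_sqrt_mult)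
    thus ?thesis unfolding d_def by simp
  qed
  have mem: "8 * (cmod w)^2 / (1 + 2*d) \<in> CS \<rho> \<rho>"
    unfolding CS_def using Popt_coupling[OF d0 dd] r by force
  have "Inf (CS \<rho> \<rho>) = 8 * (cmod w)^2 / (1 + 2*d)"
  proof (rule cInf_eq_minimum[OF mem])
    fix x assume "x \<in> CS \<rho> \<rho>"
    then obtain P where P: "P \<in> couplings \<rho> \<rho>" "x = cost P" unfolding CS_def by blast
    show "8 * (cmod w)^2 / (1 + 2*d) \<le> x"
      using lower_self[OF st P(1)] P(2) Q by (simp add: c_def w_def)
  qed
  thus ?thesis using Q by (simp add: c_def w_def)
qed

lemma cnj_real_mult: "cnj z * complex_of_real a * z = complex_of_real (a * (cmod z)^2)"
proof -
  have "cnj z * complex_of_real a * z = complex_of_real a * (z * cnj z)" by (simp add: algebra_simps)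
  thus ?thesis using complex_norm_square[of z] by simp
qed

lemma state_diag:
  assumes "0 \<le> c" "c \<le> 1" shows "is_state (st c 0)"
  unfolding is_state_def
proof
  show "trace (st c 0) = 1" by (simp add: trace2)
  show "psd (st c 0)" unfolding psd_qf
  proof
    fix x :: "complex^2"
    have "qf (st c 0) x = cnj (x$1) * complex_of_real c * x$1 + cnj (x$2) * complex_of_real (1-c) * x$2"
      unfolding qf_def sum_2 st_entries by simp
    also have "\<dots> = complex_of_real (c * (cmod (x$1))^2 + (1-c) * (cmod (x$2))^2)"
      unfolding cnj_real_mult of_real_add by (rule refl)
    finally have "qf (st c 0) x = complex_of_real (c * (cmod (x$1))^2 + (1-c) * (cmod (x$2))^2)" .
    thus "Im (qf (st c 0) x) = 0 \<and> Re (qf (st c 0) x) \<ge> 0" using assms by simp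
  qed
qed

definition Pk :: "2 \<Rightarrow> op2 \<Rightarrow> op4" where
  "Pk j \<rho> = (\<chi> p q. if fst p = j \<and> fst q = j then \<rho> $ (snd q) $ (snd p) else 0)"

lemma Pk_psd:
  fixes \<rho> :: op2
  assumes "psd \<rho>" shows "psd (Pk j \<rho>)"
  unfolding psd_qf
proof
  fix x :: "complex^(2\<times>2)"
  define y :: "complex^2" where "y = (\<chi> l. cnj (x $ (j,l)))"
  have "qf (Pk j \<rho>) x = qf \<rho> y"
    using exhaust_2[of j] unfolding qf_def Pk_def y_def sum4 sum_2
    by (auto simp: algebra_simps)
  thus "Im (qf (Pk j \<rho>) x) = 0 \<and> Re (qf (Pk j \<rho>) x) \<ge> 0" using assms unfolding psd_qf by simp
qed

lemma Pk_coupling: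
  fixes \<rho> :: op2
  assumes st: "is_state \<rho>"
  shows "Pk 1 \<rho> \<in> couplings \<rho> (st 1 0)" "Pk 2 \<rho> \<in> couplings \<rho> (st 0 0)"
proof -
  have p: "psd \<rho>" and t: "trace \<rho> = 1" using st by (auto simp: is_state_def)
  have t2: "\<rho>$1$1 + \<rho>$2$2 = 1" using t by (simp add: trace2)
  show "Pk 1 \<rho> \<in> couplings \<rho> (st 1 0)"
    unfolding couplings_def is_state_def
    using Pk_psd[OF p] t2
    by (simp add: trace_def sum4 Pk_def vec_eq_iff forall_2 ptrace1_def ptrace2_def sum_2 transpose_def)
  show "Pk 2 \<rho> \<in> couplings \<rho> (st 0 0)"
    unfolding couplings_def is_state_def
    using Pk_psd[OF p] t2
    by (simp add: trace_def sum4 Pk_def vec_eq_iff forall_2 ptrace1_def ptrace2_def sum_2 transpose_def)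
qed

lemma Inf_E1:
  fixes \<rho> :: op2
  assumes st: "is_state \<rho>"
  shows "Inf (CS \<rho> (st 1 0)) = 4 * (1 - Re (\<rho>$1$1))"
proof -
  have r22: "Re (\<rho>$2$2) = 1 - Re (\<rho>$1$1)"
    using st by (subst state_st[OF st]) simp
  have all: "cost P = 4 * (1 - Re (\<rho>$1$1))" if P: "P \<in> couplings \<rho> (st 1 0)" for P
  proof -
    note e = coupling_eqs[OF P]
    have n: "Re (P$(2,1)$(2,1)) \<ge> 0" "Re (P$(2,2)$(2,2)) \<ge> 0" using psd_diag(2)[OF e(1)] by auto
    have "Re (P$(2,1)$(2,1)) + Re (P$(2,2)$(2,2)) = 0" using arg_cong[OF e(4), of Re] by simp
    hence z: "Re (P$(2,1)$(2,1)) = 0" "Re (P$(2,2)$(2,2)) = 0" using n by auto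
    have "Re (P$(1,2)$(1,2)) = 1 - Re (\<rho>$1$1)" using arg_cong[OF e(7), of Re] z r22 by simp
    thus ?thesis using z by (simp add: cost_eq)
  qed
  have mem: "4 * (1 - Re (\<rho>$1$1)) \<in> CS \<rho> (st 1 0)"
    unfolding CS_def by (auto intro!: exI[of _ "Pk 1 \<rho>"] simp: all Pk_coupling(1)[OF st])
  show ?thesis
    by (rule cInf_eq_minimum[OF mem]) (auto simp: CS_def all)
qed

lemma Inf_E2:
  fixes \<rho> :: op2
  assumes st: "is_state \<rho>"
  shows "Inf (CS \<rho> (st 0 0)) = 4 * Re (\<rho>$1$1)"
proof -
  have all: "cost P = 4 * Re (\<rho>$1$1)" if P: "P \<in> couplings \<rho> (st 0 0)" for P
  proof -
    note e = coupling_eqs[OF P]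
    have n: "Re (P$(1,1)$(1,1)) \<ge> 0" "Re (P$(1,2)$(1,2)) \<ge> 0" using psd_diag(2)[OF e(1)] by auto
    have "Re (P$(1,1)$(1,1)) + Re (P$(1,2)$(1,2)) = 0" using arg_cong[OF e(3), of Re] by simp
    hence z: "Re (P$(1,1)$(1,1)) = 0" "Re (P$(1,2)$(1,2)) = 0" using n by auto
    have "Re (P$(2,1)$(2,1)) = Re (\<rho>$1$1)" using arg_cong[OF e(6), of Re] z by simp
    thus ?thesis using z by (simp add: cost_eq)
  qed
  have mem: "4 * Re (\<rho>$1$1) \<in> CS \<rho> (st 0 0)"
    unfolding CS_def by (auto intro!: exI[of _ "Pk 2 \<rho>"] simp: all Pk_coupling(2)[OF st])
  show ?thesis
    by (rule cInf_eq_minimum[OF mem]) (auto simp: CS_def all)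
qed

definition dg :: "real \<Rightarrow> 2 \<Rightarrow> real" where "dg x i = (if i = 1 then x else 1 - x)"

definition Pd :: "real \<Rightarrow> real \<Rightarrow> op4" where
  "Pd a b = (\<chi> p q. if p = q then complex_of_real (dg a (fst p) * dg b (snd p)) else 0)"

lemma Pd_coupling:
  assumes "0 \<le> a" "a \<le> 1" "0 \<le> b" "b \<le> 1"
  shows "Pd a b \<in> couplings (st b 0) (st a 0)" "cost (Pd a b) = 4 * (a*(1-b) + (1-a)*b)"
proof -
  have nn: "\<And>p. dg a (fst p) * dg b (snd p) \<ge> 0" using assms by (auto simp: dg_def)
  have "psd (Pd a b)" unfolding psd_qf
  proof
    fix x :: "complex^(2\<times>2)"
    have "qf (Pd a b) x = (\<Sum>p\<in>UNIV. cnj (x$p) * complex_of_real (dg a (fst p) * dg b (snd p)) * x$p)"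
      unfolding qf_def Pd_def
      by (rule sum.cong[OF refl], subst sum_one[where i="_"]) (auto split: if_splits)
    also have "\<dots> = complex_of_real (\<Sum>p\<in>UNIV. dg a (fst p) * dg b (snd p) * (cmod (x$p))^2)"
      unfolding cnj_real_mult of_real_sum by (rule refl)
    finally show "Im (qf (Pd a b) x) = 0 \<and> Re (qf (Pd a b) x) \<ge> 0"
      using nn by (simp add: sum_nonneg)
  qed
  moreover have "trace (Pd a b) = 1"
    by (simp add: trace_def sum4 Pd_def dg_def algebra_simps flip: of_real_mult of_real_add of_real_diff)
  moreover have "ptrace2 (Pd a b) = st a 0"
    by (simp add: vec_eq_iff forall_2 ptrace2_def sum_2 Pd_def dg_def algebra_simps flip: of_real_mult)
  moreover have "ptrace1 (Pd a b) = transpose (st b 0)"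
    by (simp add: vec_eq_iff forall_2 ptrace1_def transpose_def sum_2 Pd_def dg_def algebra_simps flip: of_real_mult)
  ultimately show "Pd a b \<in> couplings (st b 0) (st a 0)" by (simp add: couplings_def is_state_def)
  show "cost (Pd a b) = 4 * (a*(1-b) + (1-a)*b)" by (simp add: cost_eq Pd_def dg_def)
qed

lemma Inf_diag_le:
  assumes "0 \<le> a" "a \<le> 1" "0 \<le> b" "b \<le> 1"
  shows "Inf (CS (st b 0) (st a 0)) \<le> 4 * (a*(1-b) + (1-a)*b)"
proof -
  have "4 * (a*(1-b) + (1-a)*b) \<in> CS (st b 0) (st a 0)"
    unfolding CS_def using Pd_coupling[OF assms] by force
  thus ?thesis by (rule cInf_lower[OF _ CS_bdd])
qed

definition conjd :: "(2 \<Rightarrow> complex) \<Rightarrow> op2 \<Rightarrow> op2" where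
  "conjd u A = (\<chi> i j. u i * A$i$j * cnj (u j))"

definition kap :: "(2 \<Rightarrow> complex) \<Rightarrow> (2 \<Rightarrow> complex) \<Rightarrow> 2 \<times> 2 \<Rightarrow> complex" where
  "kap u v p = v (fst p) * cnj (u (snd p))"

definition Tph :: "(2 \<Rightarrow> complex) \<Rightarrow> (2 \<Rightarrow> complex) \<Rightarrow> op4 \<Rightarrow> op4" where
  "Tph u v P = (\<chi> p q. kap u v p * P$p$q * cnj (kap u v q))"

lemma unit_cnj: "cmod z = 1 \<Longrightarrow> cnj z * z = 1"
  using complex_norm_square[of z] by (simp add: mult.commute)

lemma Tph_coupling:
  assumes u: "\<And>i. cmod (u i) = 1" and v: "\<And>i. cmod (v i) = 1"
    and P: "P \<in> couplings \<rho> \<omega>"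
  shows "Tph u v P \<in> couplings (conjd u \<rho>) (conjd v \<omega>)" "cost (Tph u v P) = cost P"
proof -
  note e = coupling_eqs[OF P]
  have uu: "\<And>i. cnj (u i) * u i = 1" using unit_cnj[OF u] .
  have vv: "\<And>i. cnj (v i) * v i = 1" using unit_cnj[OF v] .
  have kk: "\<And>p. kap u v p * cnj (kap u v p) = 1"
  proof -
    fix p
    have "kap u v p * cnj (kap u v p) = (cnj (v (fst p)) * v (fst p)) * (cnj (u (snd p)) * u (snd p))"
      by (simp add: kap_def mult_ac)
    thus "kap u v p * cnj (kap u v p) = 1" using uu vv by simp
  qed
  have diag: "\<And>p. Tph u v P $ p $ p = P $ p $ p"
  proof -
    fix p
    have "Tph u v P $ p $ p = (kap u v p * cnj (kap u v p)) * P $ p $ p" by (simp add: Tph_def mult_ac)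
    thus "Tph u v P $ p $ p = P $ p $ p" using kk by simp
  qed
  have "psd (Tph u v P)" unfolding psd_qf
  proof
    fix x :: "complex^(2\<times>2)"
    define y :: "complex^(2\<times>2)" where "y = (\<chi> p. cnj (kap u v p) * x$p)"
    have "qf (Tph u v P) x = qf P y"
      unfolding qf_def Tph_def y_def by (simp add: mult_ac)
    thus "Im (qf (Tph u v P) x) = 0 \<and> Re (qf (Tph u v P) x) \<ge> 0" using e(1) unfolding psd_qf by simp
  qed
  moreover have "trace (Tph u v P) = 1" using e(2) by (simp add: trace_def diag)
  moreover have "ptrace2 (Tph u v P) = conjd v \<omega>"
  proof -
    have "\<And>i j. ptrace2 (Tph u v P) $ i $ j = v i * (\<Sum>k\<in>UNIV. P $ (i,k) $ (j,k)) * cnj (v j)"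
    proof -
      fix i j
      have "\<And>k. Tph u v P $ (i,k) $ (j,k) = (v i * cnj (v j)) * ((cnj (u k) * u k) * P $ (i,k) $ (j,k))"
        by (simp add: Tph_def kap_def mult_ac)
      hence "\<And>k. Tph u v P $ (i,k) $ (j,k) = (v i * cnj (v j)) * P $ (i,k) $ (j,k)" using uu by simp
      thus "ptrace2 (Tph u v P) $ i $ j = v i * (\<Sum>k\<in>UNIV. P $ (i,k) $ (j,k)) * cnj (v j)"
        by (simp add: ptrace2_def sum_distrib_left sum_distrib_right mult_ac)
    qed
    moreover have "\<And>i j. \<omega> $ i $ j = (\<Sum>k\<in>UNIV. P $ (i,k) $ (j,k))"
      using P by (auto simp: couplings_def ptrace2_def)
    ultimately show ?thesis by (simp add: vec_eq_iff conjd_def)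
  qed
  moreover have "ptrace1 (Tph u v P) = transpose (conjd u \<rho>)"
  proof -
    have "\<And>k l. ptrace1 (Tph u v P) $ k $ l = cnj (u k) * (\<Sum>i\<in>UNIV. P $ (i,k) $ (i,l)) * u l"
    proof -
      fix k l
      have "\<And>i. Tph u v P $ (i,k) $ (i,l) = (cnj (u k) * u l) * ((cnj (v i) * v i) * P $ (i,k) $ (i,l))"
        by (simp add: Tph_def kap_def mult_ac)
      hence "\<And>i. Tph u v P $ (i,k) $ (i,l) = (cnj (u k) * u l) * P $ (i,k) $ (i,l)" using vv by simp
      thus "ptrace1 (Tph u v P) $ k $ l = cnj (u k) * (\<Sum>i\<in>UNIV. P $ (i,k) $ (i,l)) * u l"
        by (simp add: ptrace1_def sum_distrib_left sum_distrib_right mult_ac)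
    qed
    moreover have "\<And>k l. \<rho> $ l $ k = (\<Sum>i\<in>UNIV. P $ (i,k) $ (i,l))"
    proof -
      fix k l
      have "transpose \<rho> $ k $ l = ptrace1 P $ k $ l" using P by (simp add: couplings_def)
      thus "\<rho> $ l $ k = (\<Sum>i\<in>UNIV. P $ (i,k) $ (i,l))" by (simp add: ptrace1_def transpose_def)
    qed
    ultimately show ?thesis by (simp add: vec_eq_iff conjd_def transpose_def mult_ac)
  qed
  ultimately show "Tph u v P \<in> couplings (conjd u \<rho>) (conjd v \<omega>)"
    by (simp add: couplings_def is_state_def)
  show "cost (Tph u v P) = cost P" by (simp add: cost_eq diag)
qed

lemma conjd_inv:
  assumes "\<And>i. cmod (u i) = 1" shows "conjd (\<lambda>i. cnj (u i)) (conjd u A) = A"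
proof -
  have uu: "\<And>i. cnj (u i) * u i = 1" using unit_cnj[OF assms] .
  have "\<And>i j. cnj (u i) * (u i * A$i$j * cnj (u j)) * u j = (cnj (u i) * u i) * A$i$j * (cnj (u j) * u j)"
    by (simp add: mult_ac)
  thus ?thesis using uu by (simp add: vec_eq_iff conjd_def)
qed

lemma CS_conjd_sub:
  assumes u: "\<And>i. cmod (u i) = 1" and v: "\<And>i. cmod (v i) = 1"
  shows "CS \<rho> \<omega> \<subseteq> CS (conjd u \<rho>) (conjd v \<omega>)"
proof
  fix x assume "x \<in> CS \<rho> \<omega>"
  then obtain P where P: "P \<in> couplings \<rho> \<omega>" "x = cost P" by (auto simp: CS_def)
  have "Tph u v P \<in> couplings (conjd u \<rho>) (conjd v \<omega>)" "cost (Tph u v P) = cost P"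
    using Tph_coupling[OF u v P(1)] by auto
  moreover hence "x = cost (Tph u v P)" using P(2) by simp
  ultimately show "x \<in> CS (conjd u \<rho>) (conjd v \<omega>)" unfolding CS_def by blast
qed

lemma CS_conjd:
  assumes u: "\<And>i. cmod (u i) = 1" and v: "\<And>i. cmod (v i) = 1"
  shows "CS (conjd u \<rho>) (conjd v \<omega>) = CS \<rho> \<omega>"
proof
  show "CS \<rho> \<omega> \<subseteq> CS (conjd u \<rho>) (conjd v \<omega>)" by (rule CS_conjd_sub[OF u v])
  have u2: "\<And>i. cmod (cnj (u i)) = 1" and v2: "\<And>i. cmod (cnj (v i)) = 1" using u v by auto
  have "CS (conjd u \<rho>) (conjd v \<omega>) \<subseteq> CS (conjd (\<lambda>i. cnj (u i)) (conjd u \<rho>)) (conjd (\<lambda>i. cnj (v i)) (conjd v \<omega>))"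
    by (rule CS_conjd_sub[OF u2 v2])
  thus "CS (conjd u \<rho>) (conjd v \<omega>) \<subseteq> CS \<rho> \<omega>" unfolding conjd_inv[OF u] conjd_inv[OF v] .
qed

definition sw :: "2 \<Rightarrow> 2" where "sw i = (if i = 1 then 2 else 1)"

lemma sw_simps [simp]: "sw 1 = 2" "sw 2 = 1" by (simp_all add: sw_def)

definition flip :: "op2 \<Rightarrow> op2" where "flip A = (\<chi> i j. A $ (sw i) $ (sw j))"

definition FP :: "op4 \<Rightarrow> op4" where
  "FP P = (\<chi> p q. P $ (sw (fst p), sw (snd p)) $ (sw (fst q), sw (snd q)))"

lemma flip_entries [simp]: "flip A $ 1 $ 1 = A $ 2 $ 2" "flip A $ 1 $ 2 = A $ 2 $ 1"
  "flip A $ 2 $ 1 = A $ 1 $ 2" "flip A $ 2 $ 2 = A $ 1 $ 1"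
  by (simp_all add: flip_def)

lemma flip_flip: "flip (flip A) = A"
  by (simp add: vec_eq_iff forall_2)

lemma FP_coupling:
  assumes P: "P \<in> couplings \<rho> \<omega>"
  shows "FP P \<in> couplings (flip \<rho>) (flip \<omega>)" "cost (FP P) = cost P"
proof -
  note e = coupling_eqs[OF P]
  have "psd (FP P)" unfolding psd_qf
  proof
    fix x :: "complex^(2\<times>2)"
    define y :: "complex^(2\<times>2)" where "y = (\<chi> p. x $ (sw (fst p), sw (snd p)))"
    have "qf (FP P) x = qf P y"
      unfolding qf_def FP_def y_def by (simp add: sum4 add_ac)
    thus "Im (qf (FP P) x) = 0 \<and> Re (qf (FP P) x) \<ge> 0" using e(1) unfolding psd_qf by simp
  qed
  moreover have "trace (FP P) = 1" using e(2) by (simp add: trace_def sum4 FP_def add_ac)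
  moreover have "ptrace2 (FP P) = flip \<omega>"
    using P unfolding couplings_def
    by (auto simp: vec_eq_iff forall_2 ptrace2_def sum_2 FP_def add_ac)
  moreover have "ptrace1 (FP P) = transpose (flip \<rho>)"
  proof -
    have t: "transpose \<rho> = ptrace1 P" using P by (simp add: couplings_def)
    have "\<And>k l. \<rho> $ l $ k = ptrace1 P $ k $ l" unfolding t[symmetric] by (simp add: transpose_def)
    thus ?thesis by (simp add: vec_eq_iff forall_2 ptrace1_def sum_2 FP_def transpose_def add_ac)
  qed
  ultimately show "FP P \<in> couplings (flip \<rho>) (flip \<omega>)" by (simp add: couplings_def is_state_def)
  show "cost (FP P) = cost P" by (simp add: cost_eq FP_def add_ac)
qed

lemma CS_flip_sub: "CS \<rho> \<omega> \<subseteq> CS (flip \<rho>) (flip \<omega>)"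
proof
  fix x assume "x \<in> CS \<rho> \<omega>"
  then obtain P where P: "P \<in> couplings \<rho> \<omega>" "x = cost P" by (auto simp: CS_def)
  have "FP P \<in> couplings (flip \<rho>) (flip \<omega>)" "cost (FP P) = cost P"
    using FP_coupling[OF P(1)] by auto
  moreover hence "x = cost (FP P)" using P(2) by simp
  ultimately show "x \<in> CS (flip \<rho>) (flip \<omega>)" unfolding CS_def by blast
qed

lemma CS_flip: "CS (flip \<rho>) (flip \<omega>) = CS \<rho> \<omega>"
  using CS_flip_sub[of \<rho> \<omega>] CS_flip_sub[of "flip \<rho>" "flip \<omega>"] unfolding flip_flip by blast

lemma flip_st: "flip (st c w) = st (1 - c) (cnj w)"
  by (simp add: vec_eq_iff forall_2)

lemma conjd_st:
  assumes "cmod \<phi> = 1"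
  shows "conjd (\<lambda>i. if i = 1 then 1 else \<phi>) (st c w) = st c (w * cnj \<phi>)"
proof -
  have u: "\<phi> * cnj \<phi> = 1" using unit_cnj[OF assms] by (simp add: mult.commute)
  have "\<phi> * complex_of_real (1 - c) * cnj \<phi> = complex_of_real (1 - c) * (\<phi> * cnj \<phi>)"
    by (simp only: mult_ac)
  hence "\<phi> * complex_of_real (1 - c) * cnj \<phi> = complex_of_real (1 - c)" using u by simp
  thus ?thesis by (simp add: vec_eq_iff forall_2 conjd_def mult.commute)
qed

lemma rep:
  assumes "cmod w' = cmod w"
  shows "\<exists>u. (\<forall>i. cmod (u i) = 1) \<and> st c w' = conjd u (st c w)"
proof (cases "w = 0")
  case True
  hence "w' = 0" using assms by simp
  moreover have "conjd (\<lambda>i. if i = 1 then 1 else 1) (st c 0) = st c 0"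
    using conjd_st[of 1 c 0] by simp
  ultimately show ?thesis using True by (intro exI[of _ "\<lambda>i. 1"]) simp
next
  case False
  define \<phi> where "\<phi> = cnj w' / cnj w"
  have n: "cmod \<phi> = 1" using assms False by (simp add: \<phi>_def norm_divide)
  have "w * cnj \<phi> = w'" using False by (simp add: \<phi>_def)
  hence "st c w' = conjd (\<lambda>i. if i = 1 then 1 else \<phi>) (st c w)" using conjd_st[OF n, of c w] by simp
  moreover have "\<forall>i. cmod ((\<lambda>i. if i = 1 then 1 else \<phi>) i) = 1" using n by simp
  ultimately show ?thesis by (intro exI[of _ "\<lambda>i. if i = 1 then 1 else \<phi>"]) simp
qed

lemma Dz_conjd:
  assumes "\<And>i. cmod (u i) = 1" "\<And>i. cmod (v i) = 1"
  shows "Dz (conjd u \<rho>) (conjd v \<omega>) = Dz \<rho> \<omega>"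
  unfolding Dz_CS CS_conjd[OF assms] ..

lemma Dz_flip: "Dz (flip \<rho>) (flip \<omega>) = Dz \<rho> \<omega>"
  unfolding Dz_CS CS_flip ..

lemma g_mono:
  fixes K m1 m2 :: real
  assumes "0 \<le> m1" "m1 < m2" "4*m2 \<le> K"
  shows "8*m1 / (1 + sqrt (K - 4*m1)) < 8*m2 / (1 + sqrt (K - 4*m2))"
proof -
  have s: "sqrt (K - 4*m2) \<le> sqrt (K - 4*m1)" using assms by simp
  have "sqrt (K - 4*m2) \<ge> 0" using assms by simp
  hence p2: "1 + sqrt (K - 4*m2) > 0" by linarith
  have s1: "sqrt (K - 4*m1) \<ge> 0" using assms by simp
  have "8*m1 / (1 + sqrt (K - 4*m1)) \<le> 8*m1 / (1 + sqrt (K - 4*m2))"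
    using s p2 assms(1) s1 by (intro divide_left_mono) (auto intro!: mult_pos_pos simp: add_pos_nonneg)
  also have "\<dots> < 8*m2 / (1 + sqrt (K - 4*m2))"
    using p2 assms by (intro divide_strict_right_mono) auto
  finally show ?thesis .
qed

lemma g_inj:
  fixes K m1 m2 :: real
  assumes "0 \<le> m1" "0 \<le> m2" "4*m1 \<le> K" "4*m2 \<le> K"
    "8*m1 / (1 + sqrt (K - 4*m1)) = 8*m2 / (1 + sqrt (K - 4*m2))"
  shows "m1 = m2"
proof (rule ccontr)
  assume "m1 \<noteq> m2"
  hence "m1 < m2 \<or> m2 < m1" by auto
  thus False using g_mono[of m1 m2 K] g_mono[of m2 m1 K] assms by auto
qed

lemma state_facts:
  fixes \<rho> :: op2
  assumes "is_state \<rho>"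
  shows "bloch \<rho> $ 3 = 2 * Re (\<rho>$1$1) - 1"
    "(norm (bloch \<rho>))^2 = 4 * (cmod (\<rho>$1$2))^2 + (2 * Re (\<rho>$1$1) - 1)^2"
  using bloch3[of "Re (\<rho>$1$1)" "\<rho>$1$2"] bloch_norm_sq[of "Re (\<rho>$1$1)" "\<rho>$1$2"]
  by (simp_all flip: state_st[OF assms])

lemma Inf_self':
  fixes \<rho> :: op2
  assumes "is_state \<rho>"
  shows "Inf (CS \<rho> \<rho>) = 8 * (cmod (\<rho>$1$2))^2 / (1 + sqrt ((1 - (2*Re (\<rho>$1$1) - 1)^2) - 4 * (cmod (\<rho>$1$2))^2))"
  using Inf_self[OF assms] by (simp add: Qf_def)

lemma m_bound:
  fixes \<rho> :: op2
  assumes "is_state \<rho>"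
  shows "4 * (cmod (\<rho>$1$2))^2 \<le> 1 - (2*Re (\<rho>$1$1) - 1)^2"
proof -
  have "(cmod (\<rho>$1$2))^2 \<le> Re (\<rho>$1$1) * (1 - Re (\<rho>$1$1))" by (rule state_bounds(3)[OF assms])
  moreover have "1 - (2*Re (\<rho>$1$1) - 1)^2 = 4 * (Re (\<rho>$1$1) * (1 - Re (\<rho>$1$1)))"
    by (simp add: power2_eq_square algebra_simps)
  ultimately show ?thesis by simp
qed

lemma rep_state:
  fixes \<rho> \<rho>' :: op2
  assumes "is_state \<rho>" "is_state \<rho>'" "cmod (\<rho>'$1$2) = cmod (\<rho>$1$2)" "Re (\<rho>'$1$1) = Re (\<rho>$1$1)"
  shows "\<exists>u. (\<forall>i. cmod (u i) = 1) \<and> \<rho>' = conjd u \<rho>"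
proof -
  have "\<rho>' = st (Re (\<rho>$1$1)) (\<rho>'$1$2)" using state_st[OF assms(2)] assms(4) by simp
  moreover have "\<rho> = st (Re (\<rho>$1$1)) (\<rho>$1$2)" using state_st[OF assms(1)] by simp
  ultimately show ?thesis using rep[OF assms(3), of "Re (\<rho>$1$1)"] by metis
qed

lemma rep_state_flip:
  fixes \<rho> \<rho>' :: op2
  assumes "is_state \<rho>" "is_state \<rho>'" "cmod (\<rho>'$1$2) = cmod (\<rho>$1$2)" "Re (\<rho>'$1$1) = 1 - Re (\<rho>$1$1)"
  shows "\<exists>u. (\<forall>i. cmod (u i) = 1) \<and> \<rho>' = conjd u (flip \<rho>)"
proof -
  have "\<rho>' = st (1 - Re (\<rho>$1$1)) (\<rho>'$1$2)" using state_st[OF assms(2)] assms(4) by simp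
  moreover have "flip \<rho> = st (1 - Re (\<rho>$1$1)) (cnj (\<rho>$1$2))"
    using state_st[OF assms(1)] flip_st by metis
  moreover have "cmod (\<rho>'$1$2) = cmod (cnj (\<rho>$1$2))" using assms(3) by simp
  ultimately show ?thesis using rep[of "\<rho>'$1$2" "cnj (\<rho>$1$2)" "1 - Re (\<rho>$1$1)"] by metis
qed

lemma diag_cases:
  fixes a b :: real
  assumes "0 \<le> a" "a \<le> 1" "0 \<le> b" "b \<le> 1" "4 \<le> 4 * (a*(1-b) + (1-a)*b)"
  shows "(a = 1 \<and> b = 0) \<or> (a = 0 \<and> b = 1)"
proof -
  have s: "a*b + (1-a)*(1-b) \<le> 0" using assms(5) by (simp add: algebra_simps)
  have n1: "a*b \<ge> 0" and n2: "(1-a)*(1-b) \<ge> 0" using assms by auto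
  hence "a*b = 0" "(1-a)*(1-b) = 0" using s by linarith+
  thus ?thesis by auto
qed

theorem theorem3p1:
  fixes \<Phi> :: "op2 \<Rightarrow> op2"
  assumes "\<forall>\<rho>. is_state \<rho> \<longrightarrow> is_state (\<Phi> \<rho>)"
  shows "(\<forall>\<rho> \<omega>. is_state \<rho> \<longrightarrow> is_state \<omega> \<longrightarrow> Dz (\<Phi> \<rho>) (\<Phi> \<omega>) = Dz \<rho> \<omega>)
     \<longleftrightarrow> ((\<forall>\<rho>. is_state \<rho> \<longrightarrow> norm (bloch (\<Phi> \<rho>)) = norm (bloch \<rho>)) \<and>
          ((\<forall>\<rho>. is_state \<rho> \<longrightarrow> bloch (\<Phi> \<rho>) $ 3 = bloch \<rho> $ 3) \<or>
           (\<forall>\<rho>. is_state \<rho> \<longrightarrow> bloch (\<Phi> \<rho>) $ 3 = - (bloch \<rho> $ 3))))"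
proof
  have H: "\<And>\<rho>. is_state \<rho> \<Longrightarrow> is_state (\<Phi> \<rho>)" using assms by blast
  assume D: "\<forall>\<rho> \<omega>. is_state \<rho> \<longrightarrow> is_state \<omega> \<longrightarrow> Dz (\<Phi> \<rho>) (\<Phi> \<omega>) = Dz \<rho> \<omega>"
  have Ds: "\<And>\<rho> \<omega>. is_state \<rho> \<Longrightarrow> is_state \<omega> \<Longrightarrow> Inf (CS (\<Phi> \<rho>) (\<Phi> \<omega>)) = Inf (CS \<rho> \<omega>)"
    using D by (simp add: Dz_CS)
  define e0 where "e0 = st 1 0"
  define e1 where "e1 = st 0 0"
  have se0: "is_state e0" and se1: "is_state e1" unfolding e0_def e1_def by (auto intro: state_diag)
  have offdiag0: "\<sigma>$1$2 = 0" if s: "is_state \<sigma>" and z: "Inf (CS \<sigma> \<sigma>) = 0" for \<sigma> :: op2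
  proof -
    have "sqrt ((1 - (2*Re (\<sigma>$1$1) - 1)^2) - 4 * (cmod (\<sigma>$1$2))^2) \<ge> 0"
      using m_bound[OF s] by simp
    hence "1 + sqrt ((1 - (2*Re (\<sigma>$1$1) - 1)^2) - 4 * (cmod (\<sigma>$1$2))^2) > 0" by linarith
    thus ?thesis using z Inf_self'[OF s] by simp
  qed
  have z0: "Inf (CS e0 e0) = 0" using Inf_self'[OF se0] by (simp add: e0_def)
  have z1: "Inf (CS e1 e1) = 0" using Inf_self'[OF se1] by (simp add: e1_def)
  define a where "a = Re (\<Phi> e0 $ 1 $ 1)"
  define b where "b = Re (\<Phi> e1 $ 1 $ 1)"
  have sa: "\<Phi> e0 = st a 0"
    using state_st[OF H[OF se0]] offdiag0[OF H[OF se0]] Ds[OF se0 se0] z0 by (simp add: a_def)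
  have sb: "\<Phi> e1 = st b 0"
    using state_st[OF H[OF se1]] offdiag0[OF H[OF se1]] Ds[OF se1 se1] z1 by (simp add: b_def)
  have ab: "0 \<le> a" "a \<le> 1" "0 \<le> b" "b \<le> 1"
    using state_bounds[OF H[OF se0]] state_bounds[OF H[OF se1]] by (auto simp: a_def b_def)
  have "Inf (CS (st b 0) (st a 0)) = 4"
    using Ds[OF se1 se0] Inf_E1[OF se1] sa sb by (simp add: e0_def e1_def)
  hence "4 \<le> 4 * (a*(1-b) + (1-a)*b)" using Inf_diag_le[OF ab] by simp
  hence ab2: "(a = 1 \<and> b = 0) \<or> (a = 0 \<and> b = 1)" by (rule diag_cases[OF ab])
  have zz: "(\<forall>\<rho>. is_state \<rho> \<longrightarrow> bloch (\<Phi> \<rho>) $ 3 = bloch \<rho> $ 3) \<or>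
           (\<forall>\<rho>. is_state \<rho> \<longrightarrow> bloch (\<Phi> \<rho>) $ 3 = - (bloch \<rho> $ 3))"
  proof (cases "a = 1")
    case True
    hence E: "\<Phi> e0 = e0" using sa by (simp add: e0_def)
    have "bloch (\<Phi> \<rho>) $ 3 = bloch \<rho> $ 3" if s: "is_state \<rho>" for \<rho>
    proof -
      have "Inf (CS (\<Phi> \<rho>) e0) = Inf (CS \<rho> e0)" using Ds[OF s se0] E by simp
      hence "Re (\<Phi> \<rho> $ 1 $ 1) = Re (\<rho> $ 1 $ 1)"
        using Inf_E1[OF s] Inf_E1[OF H[OF s]] by (simp add: e0_def)
      thus ?thesis using state_facts(1)[OF s] state_facts(1)[OF H[OF s]] by simp
    qed
    thus ?thesis by blast
  next
    case False
    hence E: "\<Phi> e0 = e1" using sa ab2 by (simp add: e1_def)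
    have "bloch (\<Phi> \<rho>) $ 3 = - (bloch \<rho> $ 3)" if s: "is_state \<rho>" for \<rho>
    proof -
      have "Inf (CS (\<Phi> \<rho>) e1) = Inf (CS \<rho> e0)" using Ds[OF s se0] E by simp
      hence "Re (\<Phi> \<rho> $ 1 $ 1) = 1 - Re (\<rho> $ 1 $ 1)"
        using Inf_E1[OF s] Inf_E2[OF H[OF s]] by (simp add: e0_def e1_def)
      thus ?thesis using state_facts(1)[OF s] state_facts(1)[OF H[OF s]] by simp
    qed
    thus ?thesis by blast
  qed
  have zsq: "(2 * Re (\<Phi> \<rho> $1$1) - 1)^2 = (2 * Re (\<rho>$1$1) - 1)^2" if s: "is_state \<rho>" for \<rho>
  proof -
    have "2 * Re (\<Phi> \<rho> $1$1) - 1 = 2 * Re (\<rho>$1$1) - 1 \<or> 2 * Re (\<Phi> \<rho> $1$1) - 1 = - (2 * Re (\<rho>$1$1) - 1)"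
      using zz state_facts(1)[OF s] state_facts(1)[OF H[OF s]] s by auto
    thus ?thesis by (metis power2_minus)
  qed
  have "norm (bloch (\<Phi> \<rho>)) = norm (bloch \<rho>)" if s: "is_state \<rho>" for \<rho>
  proof -
    define K where "K = 1 - (2 * Re (\<rho>$1$1) - 1)^2"
    have "Inf (CS (\<Phi> \<rho>) (\<Phi> \<rho>)) = Inf (CS \<rho> \<rho>)" using Ds[OF s s] .
    hence eq: "8 * (cmod (\<Phi> \<rho>$1$2))^2 / (1 + sqrt (K - 4 * (cmod (\<Phi> \<rho>$1$2))^2))
        = 8 * (cmod (\<rho>$1$2))^2 / (1 + sqrt (K - 4 * (cmod (\<rho>$1$2))^2))"
      using Inf_self'[OF s] Inf_self'[OF H[OF s]] zsq[OF s] by (simp add: K_def)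
    have "(cmod (\<Phi> \<rho>$1$2))^2 = (cmod (\<rho>$1$2))^2"
      by (rule g_inj[OF _ _ _ _ eq]) (use m_bound[OF s] m_bound[OF H[OF s]] zsq[OF s] in \<open>auto simp: K_def\<close>)
    hence "(norm (bloch (\<Phi> \<rho>)))^2 = (norm (bloch \<rho>))^2"
      using state_facts(2)[OF s] state_facts(2)[OF H[OF s]] zsq[OF s] by simp
    thus ?thesis by (simp add: power2_eq_iff_nonneg)
  qed
  with zz show "(\<forall>\<rho>. is_state \<rho> \<longrightarrow> norm (bloch (\<Phi> \<rho>)) = norm (bloch \<rho>)) \<and>
          ((\<forall>\<rho>. is_state \<rho> \<longrightarrow> bloch (\<Phi> \<rho>) $ 3 = bloch \<rho> $ 3) \<or>
           (\<forall>\<rho>. is_state \<rho> \<longrightarrow> bloch (\<Phi> \<rho>) $ 3 = - (bloch \<rho> $ 3)))" by blast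
next
  have H: "\<And>\<rho>. is_state \<rho> \<Longrightarrow> is_state (\<Phi> \<rho>)" using assms by blast
  assume N: "(\<forall>\<rho>. is_state \<rho> \<longrightarrow> norm (bloch (\<Phi> \<rho>)) = norm (bloch \<rho>)) \<and>
          ((\<forall>\<rho>. is_state \<rho> \<longrightarrow> bloch (\<Phi> \<rho>) $ 3 = bloch \<rho> $ 3) \<or>
           (\<forall>\<rho>. is_state \<rho> \<longrightarrow> bloch (\<Phi> \<rho>) $ 3 = - (bloch \<rho> $ 3)))"
  have Z: "\<And>\<rho>. is_state \<rho> \<Longrightarrow> (2 * Re (\<Phi> \<rho> $1$1) - 1)^2 = (2 * Re (\<rho>$1$1) - 1)^2"
  proof -
    fix \<rho> :: op2 assume s: "is_state \<rho>"
    have "2 * Re (\<Phi> \<rho> $1$1) - 1 = 2 * Re (\<rho>$1$1) - 1 \<or> 2 * Re (\<Phi> \<rho> $1$1) - 1 = - (2 * Re (\<rho>$1$1) - 1)"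
      using N state_facts(1)[OF s] state_facts(1)[OF H[OF s]] s by auto
    thus "(2 * Re (\<Phi> \<rho> $1$1) - 1)^2 = (2 * Re (\<rho>$1$1) - 1)^2" by (metis power2_minus)
  qed
  have M: "\<And>\<rho>. is_state \<rho> \<Longrightarrow> cmod (\<Phi> \<rho> $1$2) = cmod (\<rho>$1$2)"
  proof -
    fix \<rho> :: op2 assume s: "is_state \<rho>"
    have "(norm (bloch (\<Phi> \<rho>)))^2 = (norm (bloch \<rho>))^2" using N s by simp
    hence "(cmod (\<Phi> \<rho> $1$2))^2 = (cmod (\<rho>$1$2))^2"
      using state_facts(2)[OF s] state_facts(2)[OF H[OF s]] Z[OF s] by simp
    thus "cmod (\<Phi> \<rho> $1$2) = cmod (\<rho>$1$2)" by (simp add: power2_eq_iff_nonneg)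
  qed
  show "\<forall>\<rho> \<omega>. is_state \<rho> \<longrightarrow> is_state \<omega> \<longrightarrow> Dz (\<Phi> \<rho>) (\<Phi> \<omega>) = Dz \<rho> \<omega>"
  proof (intro allI impI)
    fix \<rho> \<omega> :: op2 assume s1: "is_state \<rho>" and s2: "is_state \<omega>"
    show "Dz (\<Phi> \<rho>) (\<Phi> \<omega>) = Dz \<rho> \<omega>"
    proof (cases "\<forall>\<rho>. is_state \<rho> \<longrightarrow> bloch (\<Phi> \<rho>) $ 3 = bloch \<rho> $ 3")
      case True
      have c: "\<And>\<rho>. is_state \<rho> \<Longrightarrow> Re (\<Phi> \<rho> $1$1) = Re (\<rho>$1$1)"
      proof -
        fix \<rho> :: op2 assume s: "is_state \<rho>"
        show "Re (\<Phi> \<rho> $1$1) = Re (\<rho>$1$1)"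
          using True s state_facts(1)[OF s] state_facts(1)[OF H[OF s]] by auto
      qed
      obtain u where u: "\<forall>i. cmod (u i) = 1" "\<Phi> \<rho> = conjd u \<rho>"
        using rep_state[OF s1 H[OF s1] M[OF s1] c[OF s1]] by blast
      obtain v where v: "\<forall>i. cmod (v i) = 1" "\<Phi> \<omega> = conjd v \<omega>"
        using rep_state[OF s2 H[OF s2] M[OF s2] c[OF s2]] by blast
      show ?thesis using Dz_conjd[of u v \<rho> \<omega>] u v by simp
    next
      case False
      hence F: "\<forall>\<rho>. is_state \<rho> \<longrightarrow> bloch (\<Phi> \<rho>) $ 3 = - (bloch \<rho> $ 3)" using N by blast
      have c: "\<And>\<rho>. is_state \<rho> \<Longrightarrow> Re (\<Phi> \<rho> $1$1) = 1 - Re (\<rho>$1$1)"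
      proof -
        fix \<rho> :: op2 assume s: "is_state \<rho>"
        show "Re (\<Phi> \<rho> $1$1) = 1 - Re (\<rho>$1$1)"
          using F s state_facts(1)[OF s] state_facts(1)[OF H[OF s]] by auto
      qed
      obtain u where u: "\<forall>i. cmod (u i) = 1" "\<Phi> \<rho> = conjd u (flip \<rho>)"
        using rep_state_flip[OF s1 H[OF s1] M[OF s1] c[OF s1]] by blast
      obtain v where v: "\<forall>i. cmod (v i) = 1" "\<Phi> \<omega> = conjd v (flip \<omega>)"
        using rep_state_flip[OF s2 H[OF s2] M[OF s2] c[OF s2]] by blast
      show ?thesis using Dz_conjd[of u v "flip \<rho>" "flip \<omega>"] u v Dz_flip by simp
    qed
  qed
qed

end
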